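(* Let $\ell$ be an odd prime. For any real number $M$, there are at most $2\ell M$ primes $p\in\mathbb{P}$ with $R_\ell(p)\le M$.
   Context: $\Phi_\ell(X)$ denotes the $\ell$-th cyclotomic polynomial. For a natural number $n$, $R_\ell(n):=\min\{d\in\mathbb{N}: n\mid \Phi_\ell(d)\}$ if such $d$ exists, and $R_\ell(n)=\infty$ otherwise. $\mathbb{P}$ denotes the set of primes $p$ that divide $\Phi_\ell(d)$ for some $d\in\mathbb{N}$. *)

theory Defs
  imports "HOL-Analysis.Analysis" "HOL-Computational_Algebra.Polynomial" "HOL-Library.Extended_Nat"
begin

definition cyclotomic :: "nat \<Rightarrow> complex poly" where
  "cyclotomic n = (\<Prod>k\<in>{k. 1 \<le> k \<and> k \<le> n \<and> coprime k n}.
      [:- cis (2 * pi * real k / real n), 1:])"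

definition dvd_cyclo :: "nat \<Rightarrow> nat \<Rightarrow> nat \<Rightarrow> bool" where
  "dvd_cyclo n l d \<longleftrightarrow> (\<exists>m::int. poly (cyclotomic l) (of_nat d) = of_int (int n * m))"

definition R :: "nat \<Rightarrow> nat \<Rightarrow> enat" where
  "R l n = (if \<exists>d. d \<ge> 1 \<and> dvd_cyclo n l d
            then enat (LEAST d. d \<ge> 1 \<and> dvd_cyclo n l d) else \<infinity>)"

definition Pset :: "nat \<Rightarrow> nat set" where
  "Pset l = {p. prime p \<and> (\<exists>d. d \<ge> 1 \<and> dvd_cyclo p l d)}"

end

theory Submission
  imports Defs
begin

lemma prod_primes_dvd:
  fixes n :: nat
  assumes "finite P" "\<And>p. p \<in> P \<Longrightarrow> prime p \<and> p dvd n"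
  shows "(\<Prod>P) dvd n"
  using assms
proof (induction P rule: finite_induct)
  case empty then show ?case by simp
next
  case (insert q F)
  have "coprime q (\<Prod>F)"
  proof (rule prime_imp_coprime)
    show "prime q" using insert by auto
    show "\<not> q dvd \<Prod>F"
    proof
      assume "q dvd \<Prod>F"
      then obtain r where "r \<in> F" "q dvd r"
        using insert by (auto simp: prime_dvd_prod_iff)
      have pq: "prime q" using insert.prems by simp
      have pr: "prime r" using insert.prems \<open>r \<in> F\<close> by simp
      have "q = r" using pq pr \<open>q dvd r\<close> by (simp add: primes_dvd_imp_eq)
      with insert \<open>r \<in> F\<close> show False by auto
    qed
  qed
  moreover have "q dvd n" "\<Prod>F dvd n" using insert by auto
  ultimately show ?case using insert by (simp add: divides_mult)
qed

lemma geom_lt: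
  fixes r :: nat assumes "r \<ge> 1"
  shows "(\<Sum>i<n. r^i) < (r+1)^n"
proof (induction n)
  case 0 then show ?case by simp
next
  case (Suc n)
  have "r^n \<le> r * (r+1)^n"
  proof -
    have "r^n \<le> (r+1)^n" by (rule power_mono) auto
    also have "\<dots> \<le> r * (r+1)^n" using assms by simp
    finally show ?thesis .
  qed
  then show ?case using Suc by simp
qed


lemma unity_prod:
  assumes "n > 0"
  shows "(\<Prod>k<n. [:- cis (2 * pi * real k / real n), 1:]) = monom 1 n - 1"
proof (rule poly_eqI_degree_lead_coeff[where A="{z::complex. z^n = 1}" and n=n])
  let ?p = "(\<Prod>k<n. [:- cis (2 * pi * real k / real n), 1:])"
  have dp: "degree ?p = n"
    by (subst degree_prod_eq_sum_degree) auto
  have lp: "lead_coeff ?p = 1" by (simp add: lead_coeff_prod)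
  show "coeff ?p n = coeff (monom 1 n - 1 :: complex poly) n"
    using lp dp assms by (simp add: coeff_monom)
  show "card {z::complex. z^n = 1} \<ge> n" using card_roots_unity_eq[OF assms] by simp
  show "degree ?p \<le> n" using dp by simp
  show "degree (monom 1 n - 1 :: complex poly) \<le> n"
    by (metis degree_diff_le degree_monom_le degree_1 le0)
  fix z :: complex assume "z \<in> {z. z^n = 1}"
  then obtain k where k: "k < n" "z = cis (2 * pi * real k / real n)"
    using Complex.bij_betw_roots_unity[OF assms] unfolding bij_betw_def by force
  have "poly ?p z = 0" using k by (auto simp: poly_prod)
  moreover have "poly (monom 1 n - 1) z = 0" using \<open>z \<in> _\<close> by (simp add: poly_monom)
  ultimately show "poly ?p z = poly (monom 1 n - 1) z" by simp
qed

lemma cyclo_prime: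
  assumes "prime l"
  shows "cyclotomic l * [:-1, 1:] = monom 1 l - 1"
proof -
  have l0: "l > 0" using assms prime_gt_0_nat by blast
  have S: "{k. 1 \<le> k \<and> k \<le> l \<and> coprime k l} = {1..<l}"
  proof safe
    fix k assume "1 \<le> k" "k \<le> l" "coprime k l"
    have "k < l"
    proof (rule ccontr)
      assume "\<not> k < l"
      then have "k = l" using \<open>k \<le> l\<close> by simp
      then have "l = 1" using \<open>coprime k l\<close> by simp
      then show False using assms by simp
    qed
    then show "k \<in> {1..<l}" using \<open>1 \<le> k\<close> by simp
  next
    fix k assume "k \<in> {1..<l}"
    then have "\<not> l dvd k" by (auto dest: dvd_imp_le)
    then show "coprime k l" using assms by (metis coprime_commute prime_imp_coprime)
  qed auto
  have U: "{..<l} = insert 0 {1..<l}" using l0 by auto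
  have "(\<Prod>k<l. [:- cis (2 * pi * real k / real l), 1:]) = [:-1,1:] * cyclotomic l"
    unfolding cyclotomic_def S U by (subst prod.insert) auto
  then show ?thesis using unity_prod[OF l0] by (simp add: mult.commute)
qed

lemma geom_val: "(\<Sum>i<n. (x::complex)^i) * (x - 1) = x^n - 1"
  by (induction n) (auto simp: algebra_simps)

lemma geom_poly:
  "(\<Sum>i<n. monom (1::complex) i) * [:-1, 1:] = monom 1 n - 1"
proof -
  have "poly ((\<Sum>i<n. monom (1::complex) i) * [:-1, 1:]) x = poly (monom 1 n - 1) x" for x :: complex
    using geom_val[of x n] by (simp add: poly_sum poly_monom algebra_simps)
  then show ?thesis by (intro poly_eq_poly_eq_iff[THEN iffD1]) auto
qed

lemma poly_cyclo_prime:
  assumes "prime l"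
  shows "poly (cyclotomic l) x = (\<Sum>i<l. x^i)"
proof -
  have "cyclotomic l * [:-1, 1:] = (\<Sum>i<l. monom (1::complex) i) * [:-1, 1:]"
    using cyclo_prime[OF assms] geom_poly by simp
  then have "cyclotomic l = (\<Sum>i<l. monom (1::complex) i)"
    by (metis mult_right_cancel pCons_eq_0_iff zero_neq_one)
  then show ?thesis by (simp add: poly_sum poly_monom)
qed


lemma dvd_cyclo_iff:
  assumes "prime l"
  shows "dvd_cyclo n l d \<longleftrightarrow> n dvd (\<Sum>i<l. d^i)"
proof -
  have "poly (cyclotomic l) (of_nat d) = of_int (int (\<Sum>i<l. d^i))"
    by (simp add: poly_cyclo_prime[OF assms])
  then have "dvd_cyclo n l d \<longleftrightarrow> (\<exists>m::int. int (\<Sum>i<l. d^i) = int n * m)"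
    unfolding dvd_cyclo_def by (metis of_int_eq_iff)
  also have "\<dots> \<longleftrightarrow> int n dvd int (\<Sum>i<l. d^i)" by (auto simp: dvd_def)
  also have "\<dots> \<longleftrightarrow> n dvd (\<Sum>i<l. d^i)" by (rule int_dvd_int_iff)
  finally show ?thesis .
qed

lemma S_mod: "(\<Sum>i<l. (d::nat)^i) mod p = (\<Sum>i<l. (d mod p)^i) mod p"
  by (metis (no_types, lifting) mod_sum_eq power_mod sum.cong)

lemma R_lt:
  assumes "prime l" "prime p" "d \<ge> 1" "dvd_cyclo p l d"
  shows "R l p = enat (LEAST d. d \<ge> 1 \<and> dvd_cyclo p l d)"
    and "(LEAST d. d \<ge> 1 \<and> dvd_cyclo p l d) < p"
    and "(LEAST d. d \<ge> 1 \<and> dvd_cyclo p l d) \<ge> 1"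
    and "p dvd (\<Sum>i<l. (LEAST d. d \<ge> 1 \<and> dvd_cyclo p l d)^i)"
proof -
  show "R l p = enat (LEAST d. d \<ge> 1 \<and> dvd_cyclo p l d)"
    unfolding R_def using assms by auto
  have l0: "l > 0" using assms prime_gt_0_nat by blast
  have pd: "p dvd (\<Sum>i<l. d^i)" using assms dvd_cyclo_iff by blast
  have "d mod p \<noteq> 0"
  proof
    assume h: "d mod p = 0"
    have "(\<Sum>i<l. (0::nat)^i) = (\<Sum>i\<in>{0}. (0::nat)^i)"
      by (rule sum.mono_neutral_right) (use l0 in auto)
    then have "(\<Sum>i<l. (0::nat)^i) = 1" by simp
    then have "(\<Sum>i<l. d^i) mod p = 1 mod p" using S_mod[where l=l and d=d and p=p] h by simp
    with pd have "p dvd 1" by (simp add: mod_eq_dvd_iff_nat dvd_eq_mod_eq_0)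
    then show False using assms(2) by simp
  qed
  moreover have "p dvd (\<Sum>i<l. (d mod p)^i)" using pd S_mod[where l=l and d=d and p=p]
    by (simp add: dvd_eq_mod_eq_0)
  ultimately have P: "d mod p \<ge> 1 \<and> dvd_cyclo p l (d mod p)"
    using dvd_cyclo_iff[OF assms(1)] by auto
  have "(LEAST d. d \<ge> 1 \<and> dvd_cyclo p l d) \<le> d mod p"
    by (rule Least_le) (rule P)
  also have "d mod p < p" using assms(2) prime_gt_0_nat by auto
  finally show "(LEAST d. d \<ge> 1 \<and> dvd_cyclo p l d) < p" .
  have "(LEAST d. d \<ge> 1 \<and> dvd_cyclo p l d) \<ge> 1 \<and> dvd_cyclo p l (LEAST d. d \<ge> 1 \<and> dvd_cyclo p l d)"
    by (rule LeastI) (rule P)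
  then show "(LEAST d. d \<ge> 1 \<and> dvd_cyclo p l d) \<ge> 1"
    and "p dvd (\<Sum>i<l. (LEAST d. d \<ge> 1 \<and> dvd_cyclo p l d)^i)"
    using dvd_cyclo_iff[OF assms(1)] by auto
qed

lemma card_B:
  fixes r l :: nat
  assumes "r \<ge> 1" "l > 0"
  shows "finite {p. prime p \<and> p dvd (\<Sum>i<l. r^i) \<and> r < p}"
    and "card {p. prime p \<and> p dvd (\<Sum>i<l. r^i) \<and> r < p} \<le> l"
proof -
  let ?B = "{p. prime p \<and> p dvd (\<Sum>i<l. r^i) \<and> r < p}"
  let ?S = "(\<Sum>i<l. r^i)"
  have "(\<Sum>i<l. (1::nat)) \<le> ?S"
    by (rule sum_mono) (use assms in \<open>simp add: one_le_power\<close>)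
  then have S0: "?S > 0" using assms(2) by simp
  have "?B \<subseteq> {..?S}"
  proof
    fix p assume "p \<in> ?B"
    then have "p dvd ?S" by simp
    then have "p \<le> ?S" using S0 by (rule dvd_imp_le)
    then show "p \<in> {..?S}" by simp
  qed
  then show fin: "finite ?B" by (rule finite_subset) simp
  have "\<Prod>?B dvd ?S" by (rule prod_primes_dvd[OF fin]) auto
  then have "\<Prod>?B \<le> ?S" using S0 by (rule dvd_imp_le)
  also have "?S < (r+1)^l" by (rule geom_lt[OF assms(1)])
  finally have "\<Prod>?B < (r+1)^l" .
  moreover have "(r+1)^card ?B \<le> \<Prod>?B"
  proof -
    have "(\<Prod>p\<in>?B. r+1) \<le> (\<Prod>p\<in>?B. p)" by (rule prod_mono) auto
    then show ?thesis by simp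
  qed
  ultimately have lt: "(r+1)^card ?B < (r+1)^l" by linarith
  have gt1: "1 < r + 1" using assms by simp
  have "card ?B < l" using gt1 lt by (rule power_less_imp_less_exp)
  then show "card ?B \<le> l" by simp
qed


theorem proposition3:
  fixes l :: nat and M :: real
  assumes "prime l" and "odd l" and "M \<ge> 0"
  shows "finite {p \<in> Pset l. R l p \<noteq> \<infinity> \<and> real (the_enat (R l p)) \<le> M}
    \<and> real (card {p \<in> Pset l. R l p \<noteq> \<infinity> \<and> real (the_enat (R l p)) \<le> M}) \<le> 2 * real l * M"
proof -
  let ?A = "{p \<in> Pset l. R l p \<noteq> \<infinity> \<and> real (the_enat (R l p)) \<le> M}"
  define B where "B r = {p. prime p \<and> p dvd (\<Sum>i<l. r^i) \<and> r < p}" for r :: nat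
  define N where "N = nat \<lfloor>M\<rfloor>"
  have l0: "l > 0" using assms prime_gt_0_nat by blast
  have sub: "?A \<subseteq> (\<Union>r\<in>{1..N}. B r)"
  proof
    fix p assume "p \<in> ?A"
    then obtain d where p: "prime p" "d \<ge> 1" "dvd_cyclo p l d" and M: "real (the_enat (R l p)) \<le> M"
      unfolding Pset_def by auto
    let ?r = "LEAST d. d \<ge> 1 \<and> dvd_cyclo p l d"
    note RR = R_lt[OF assms(1) p]
    have "real ?r \<le> M" using M RR(1) by simp
    then have "?r \<le> N" unfolding N_def by (rule le_nat_floor)
    then have "?r \<in> {1..N}" using RR(3) by simp
    moreover have "p \<in> B ?r" unfolding B_def using RR(2,4) p(1) by simp
    ultimately show "p \<in> (\<Union>r\<in>{1..N}. B r)" by blast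
  qed
  have finB: "finite (B r)" if "r \<in> {1..N}" for r
  proof -
    have r1: "r \<ge> 1" using that by simp
    show ?thesis unfolding B_def by (rule card_B(1)[OF r1 l0])
  qed
  have cardB: "card (B r) \<le> l" if "r \<in> {1..N}" for r
  proof -
    have r1: "r \<ge> 1" using that by simp
    show ?thesis unfolding B_def by (rule card_B(2)[OF r1 l0])
  qed
  have finU: "finite (\<Union>r\<in>{1..N}. B r)" using finB by auto
  have fin: "finite ?A" using finite_subset[OF sub finU] .
  have "card ?A \<le> card (\<Union>r\<in>{1..N}. B r)" by (rule card_mono[OF finU sub])
  also have "\<dots> \<le> (\<Sum>r\<in>{1..N}. card (B r))" by (rule card_UN_le) simp
  also have "\<dots> \<le> (\<Sum>r\<in>{1..N}. l)" by (rule sum_mono) (rule cardB, assumption)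
  also have "\<dots> = N * l" by simp
  finally have c: "real (card ?A) \<le> real N * real l" by (simp only: of_nat_mult[symmetric] of_nat_le_iff)
  have "real N \<le> M" unfolding N_def using assms(3) by (rule of_nat_floor)
  then have "real N * real l \<le> M * real l" by (rule mult_right_mono) simp
  also have "\<dots> \<le> 2 * real l * M" using assms(3) by simp
  finally show ?thesis using fin c by simp
qed

end
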